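(* Let $n$ be a positive integer and $m_0, m_1, \dots, m_{n-1}$ positive integers. Let $x_0, x_1, \dots, x_n$ be positive odd integers with $x_k = (2^{m_{k-1}}x_{k-1}-1)/3$ for $1 \le k \le n$, and put $b_k = \sum_{h=0}^{k-1} m_h$ (so $b_0 = 0$). For a positive odd integer $y_0$, define $y_k = (2^{m_{k-1}}y_{k-1}-1)/3$ for $1 \le k \le n$. Then $y_1, \dots, y_n$ are all (odd) integers if and only if $y_0 \equiv x_0 \pmod{2\cdot 3^n}$; in that case $y_k \equiv x_k \pmod{2^{b_k+1}3^{n-k}}$ for every $0 \le k \le n$. In particular there are infinitely many such sequences $y_0, y_1, \dots, y_n$ generated with the same numbers $m_0, \dots, m_{n-1}$. *)

theory Defs
  imports Complex_Main "HOL-Number_Theory.Cong"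
begin

primrec inv_seq :: "(nat \<Rightarrow> nat) \<Rightarrow> int \<Rightarrow> nat \<Rightarrow> real" where
  "inv_seq m y0 0 = of_int y0"
| "inv_seq m y0 (Suc k) = (2 ^ (m k) * inv_seq m y0 k - 1) / 3"

end

theory Submission
  imports Defs
begin

lemma key:
  fixes m :: "nat \<Rightarrow> nat" and x :: "nat \<Rightarrow> int" and w :: int
  assumes rec: "\<forall>k\<in>{1..n}. 3 * x k = 2 ^ (m (k - 1)) * x (k - 1) - 1"
  shows "k \<le> n \<Longrightarrow> inv_seq m w k = of_int (x k) + 2 ^ (\<Sum>h<k. m h) * of_int (w - x 0) / 3 ^ k"
proof (induction k)
  case 0
  then show ?case by simp
next
  case (Suc k)
  have "3 * x (Suc k) = 2 ^ (m k) * x k - 1" using rec Suc.prems by force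
  then have xr: "real_of_int (x (Suc k)) = (2 ^ (m k) * of_int (x k) - 1) / 3"
    by (metis (mono_tags, opaque_lifting) nonzero_mult_div_cancel_left of_int_1 of_int_diff of_int_mult of_int_numeral of_int_power zero_neq_numeral)
  have IH: "inv_seq m w k = of_int (x k) + 2 ^ (\<Sum>h<k. m h) * of_int (w - x 0) / 3 ^ k"
    using Suc by simp
  show ?case
    by (simp add: IH xr power_add field_simps)
qed

lemma int_part:
  fixes m :: "nat \<Rightarrow> nat" and x :: "nat \<Rightarrow> int" and w :: int and n :: nat
  assumes rec: "\<forall>k\<in>{1..n}. 3 * x k = 2 ^ (m (k - 1)) * x (k - 1) - 1"
    and xo: "\<forall>k\<le>n. x k > 0 \<and> odd (x k)"
    and c: "[w = x 0] (mod (2 * 3 ^ n))"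
    and k: "k \<le> n"
  shows "\<exists>z::int. inv_seq m w k = of_int z \<and> odd z \<and>
             [z = x k] (mod (2 ^ ((\<Sum>h<k. m h) + 1) * 3 ^ (n - k)))"
proof -
  obtain t where t: "w - x 0 = 2 * 3 ^ n * t" using c by (auto simp: cong_iff_dvd_diff)
  define b where "b = (\<Sum>h<k. m h)"
  define z where "z = x k + 2 ^ (b + 1) * 3 ^ (n - k) * t"
  have n3: "(3::real) ^ n = 3 ^ k * 3 ^ (n - k)" using k by (simp flip: power_add)
  have "inv_seq m w k = of_int (x k) + 2 ^ b * of_int (w - x 0) / 3 ^ k"
    using key[OF rec k] b_def by simp
  also have "\<dots> = of_int z" unfolding z_def t by (simp add: n3 field_simps)
  finally have e: "inv_seq m w k = of_int z" .
  have "odd z" using xo k unfolding z_def by auto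
  moreover have "[z = x k] (mod (2 ^ (b + 1) * 3 ^ (n - k)))"
    unfolding z_def cong_iff_dvd_diff by simp
  ultimately show ?thesis using e b_def by blast
qed

lemma fwd:
  fixes m :: "nat \<Rightarrow> nat" and x :: "nat \<Rightarrow> int" and w :: int and n :: nat
  assumes rec: "\<forall>k\<in>{1..n}. 3 * x k = 2 ^ (m (k - 1)) * x (k - 1) - 1"
    and xo: "\<forall>k\<le>n. x k > 0 \<and> odd (x k)"
    and wo: "odd w"
    and I: "inv_seq m w n \<in> \<int>"
  shows "[w = x 0] (mod (2 * 3 ^ n))"
proof -
  define b where "b = (\<Sum>h<n. m h)"
  obtain z where z: "inv_seq m w n = of_int z" using I Ints_cases by metis
  have "of_int z = of_int (x n) + 2 ^ b * of_int (w - x 0) / (3::real) ^ n"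
    using key[OF rec order_refl, of w] z b_def by simp
  then have "of_int (3 ^ n * (z - x n)) = (of_int (2 ^ b * (w - x 0)) :: real)"
    by (simp add: field_simps)
  then have "3 ^ n * (z - x n) = 2 ^ b * (w - x 0)" using of_int_eq_iff by blast
  then have "(3::int) ^ n dvd 2 ^ b * (w - x 0)" by (metis dvd_triv_left)
  moreover have "coprime ((3::int) ^ n) (2 ^ b)" by simp
  ultimately have d3: "(3::int) ^ n dvd (w - x 0)" using coprime_dvd_mult_right_iff by blast
  have d2: "(2::int) dvd (w - x 0)" using wo xo by auto
  have "coprime (2::int) (3 ^ n)" by simp
  then have "2 * 3 ^ n dvd (w - x 0)" using d2 d3 by (simp add: divides_mult)
  then show ?thesis by (simp add: cong_iff_dvd_diff)
qed

theorem lemma10: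
  fixes n :: nat and m :: "nat \<Rightarrow> nat" and x :: "nat \<Rightarrow> int" and y0 :: int
  assumes "n > 0"
    and "\<forall>k<n. m k > 0"
    and "\<forall>k\<le>n. x k > 0 \<and> odd (x k)"
    and "\<forall>k\<in>{1..n}. 3 * x k = 2 ^ (m (k - 1)) * x (k - 1) - 1"
    and "y0 > 0" and "odd y0"
  shows "((\<forall>k\<in>{1..n}. inv_seq m y0 k \<in> \<int>) \<longleftrightarrow> [y0 = x 0] (mod (2 * 3 ^ n)))
    \<and> ([y0 = x 0] (mod (2 * 3 ^ n)) \<longrightarrow>
         (\<forall>k\<le>n. \<exists>z::int. inv_seq m y0 k = of_int z \<and> odd z \<and>
             [z = x k] (mod (2 ^ ((\<Sum>h<k. m h) + 1) * 3 ^ (n - k)))))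
    \<and> infinite {w::int. w > 0 \<and> odd w \<and> (\<forall>k\<in>{1..n}. inv_seq m w k \<in> \<int>)}"
proof -
  have bk: "\<forall>k\<in>{1..n}. inv_seq m w k \<in> \<int>" if cw: "[w = x 0] (mod (2 * 3 ^ n))" for w
  proof
    fix k assume "k \<in> {1..n}"
    then obtain z where "inv_seq m w k = of_int z"
      using int_part[OF assms(4) assms(3) cw, of k] by auto
    then show "inv_seq m w k \<in> \<int>" by simp
  qed
  have A: "(\<forall>k\<in>{1..n}. inv_seq m y0 k \<in> \<int>) \<longleftrightarrow> [y0 = x 0] (mod (2 * 3 ^ n))"
    using bk fwd[OF assms(4) assms(3) assms(6)] assms(1) by auto
  have B: "[y0 = x 0] (mod (2 * 3 ^ n)) \<longrightarrow>
         (\<forall>k\<le>n. \<exists>z::int. inv_seq m y0 k = of_int z \<and> odd z \<and>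
             [z = x k] (mod (2 ^ ((\<Sum>h<k. m h) + 1) * 3 ^ (n - k))))"
    using int_part[OF assms(4) assms(3)] by blast
  define f where "f = (\<lambda>t::nat. x 0 + 2 * 3 ^ n * int t)"
  have inj: "inj f" unfolding f_def by (rule injI) simp
  have sub: "range f \<subseteq> {w::int. w > 0 \<and> odd w \<and> (\<forall>k\<in>{1..n}. inv_seq m w k \<in> \<int>)}"
  proof
    fix w assume "w \<in> range f"
    then obtain t where t: "w = f t" by auto
    have x0: "x 0 > 0" "odd (x 0)" using assms(3) by auto
    have "w > 0" using x0 t unfolding f_def by (simp add: add_pos_nonneg)
    moreover have "odd w" using x0 t unfolding f_def by simp
    moreover have "[w = x 0] (mod (2 * 3 ^ n))" unfolding t f_def cong_iff_dvd_diff by simp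
    ultimately show "w \<in> {w::int. w > 0 \<and> odd w \<and> (\<forall>k\<in>{1..n}. inv_seq m w k \<in> \<int>)}"
      using bk by blast
  qed
  have C: "infinite {w::int. w > 0 \<and> odd w \<and> (\<forall>k\<in>{1..n}. inv_seq m w k \<in> \<int>)}"
  proof -
    have "infinite (range f)"
    proof
      assume "finite (range f)"
      then have "finite (UNIV::nat set)" using finite_imageD inj by blast
      then show False by simp
    qed
    then show ?thesis using infinite_super[OF sub] by blast
  qed
  show ?thesis using A B C by blast
qed

end
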